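(* Let $U$ be a finite nonempty set and $R$ an equivalence relation on $U$. Let $\mathbf{S}(R)=\{X\subseteq U \mid R^{*}(X)=U\}$ and let $\mathbf{I}(R)=\{X\subseteq U \mid X\subseteq S \text{ for some inclusion-minimal member } S \text{ of } \mathbf{S}(R)\}$ be the family of independent sets of the support matroid $M(R)=(U,\mathbf{I}(R))$. Then $$\mathbf{I}(R)=\{X\subseteq U \mid \forall x\in U,\ |RN(x)\cap X|\leq 1\}.$$
   Context: For $x\in U$, $RN(x)=\{y\in U\mid xRy\}$ is the equivalence class of $x$. The upper approximation of $X\subseteq U$ is $R^{*}(X)=\{x\in U\mid RN(x)\cap X\neq\emptyset\}$. The support matroid $M(R)$ induced by $R$ is the matroid on $U$ whose independent sets are the subsets of inclusion-minimal members of $\mathbf{S}(R)$; its support sets (subsets of $U$ containing a base, i.e. a maximal independent set) are exactly the members of $\mathbf{S}(R)$. *)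

theory Defs
  imports Main
begin

definition RN :: "('a \<times> 'a) set \<Rightarrow> 'a \<Rightarrow> 'a set" where
  "RN R x = R `` {x}"

definition upper_approx :: "'a set \<Rightarrow> ('a \<times> 'a) set \<Rightarrow> 'a set \<Rightarrow> 'a set" where
  "upper_approx U R X = {x \<in> U. RN R x \<inter> X \<noteq> {}}"

definition support_sets :: "'a set \<Rightarrow> ('a \<times> 'a) set \<Rightarrow> 'a set set" where
  "support_sets U R = {X. X \<subseteq> U \<and> upper_approx U R X = U}"

definition indep_sets :: "'a set \<Rightarrow> ('a \<times> 'a) set \<Rightarrow> 'a set set" where
  "indep_sets U R = {X. X \<subseteq> U \<and> (\<exists>S \<in> support_sets U R.
      (\<forall>T \<in> support_sets U R. T \<subseteq> S \<longrightarrow> T = S) \<and> X \<subseteq> S)}"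

end

theory Submission
  imports Defs
begin

lemma RN_self: "equiv U R \<Longrightarrow> x \<in> U \<Longrightarrow> x \<in> RN R x"
  unfolding RN_def by (rule equiv_class_self)

lemma RN_eq: "equiv U R \<Longrightarrow> y \<in> RN R x \<Longrightarrow> RN R y = RN R x \<and> x \<in> U \<and> y \<in> U"
  unfolding RN_def using equiv_class_eq_iff[of U R x y] by auto

lemma RN_sub: "equiv U R \<Longrightarrow> RN R x \<subseteq> U"
  unfolding RN_def equiv_def refl_on_def by blast

theorem theorem1:
  fixes U :: "'a set" and R :: "('a \<times> 'a) set"
  assumes "finite U" and "U \<noteq> {}" and "equiv U R"
  shows "indep_sets U R = {X. X \<subseteq> U \<and> (\<forall>x \<in> U. card (RN R x \<inter> X) \<le> 1)}"
proof -
  have fin: "\<And>x X. finite (RN R x \<inter> X)"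
    using RN_sub[OF assms(3)] assms(1) by (meson finite_Int finite_subset)
  have cardiff: "\<And>x X. card (RN R x \<inter> X) \<le> 1 \<longleftrightarrow> (\<forall>a\<in>RN R x \<inter> X. \<forall>b\<in>RN R x \<inter> X. a = b)"
    using card_le_Suc0_iff_eq[OF fin] by simp
  have supp: "\<And>S. S \<in> support_sets U R \<longleftrightarrow> S \<subseteq> U \<and> (\<forall>x\<in>U. RN R x \<inter> S \<noteq> {})"
    unfolding support_sets_def upper_approx_def by blast
  show ?thesis
  proof (intro set_eqI iffI)
    fix X assume "X \<in> indep_sets U R"
    then obtain S where XU: "X \<subseteq> U" and S: "S \<in> support_sets U R"
      and mn: "\<forall>T \<in> support_sets U R. T \<subseteq> S \<longrightarrow> T = S" and XS: "X \<subseteq> S"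
      unfolding indep_sets_def by blast
    have "\<forall>x\<in>U. card (RN R x \<inter> X) \<le> 1"
    proof (intro ballI)
      fix x assume xU: "x \<in> U"
      have "\<forall>a\<in>RN R x \<inter> S. \<forall>b\<in>RN R x \<inter> S. a = b"
      proof (intro ballI, rule ccontr)
        fix a b assume a: "a \<in> RN R x \<inter> S" and b: "b \<in> RN R x \<inter> S" and ne: "a \<noteq> b"
        have "S - {b} \<in> support_sets U R"
          unfolding supp
        proof (intro conjI ballI)
          show "S - {b} \<subseteq> U" using S supp by blast
        next
          fix y assume yU: "y \<in> U"
          obtain c where c: "c \<in> RN R y" "c \<in> S" using S supp yU by blast
          show "RN R y \<inter> (S - {b}) \<noteq> {}"
          proof (cases "c = b")
            case True
            have "RN R y = RN R b" using RN_eq[OF assms(3) c(1)] True by simp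
            also have "\<dots> = RN R x" using RN_eq[OF assms(3)] b by blast
            finally show ?thesis using a ne by blast
          next
            case False then show ?thesis using c by blast
          qed
        qed
        then show False using mn b by blast
      qed
      then show "card (RN R x \<inter> X) \<le> 1" using cardiff XS by blast
    qed
    then show "X \<in> {X. X \<subseteq> U \<and> (\<forall>x \<in> U. card (RN R x \<inter> X) \<le> 1)}" using XU by blast
  next
    fix X assume "X \<in> {X. X \<subseteq> U \<and> (\<forall>x \<in> U. card (RN R x \<inter> X) \<le> 1)}"
    then have XU: "X \<subseteq> U" and one: "\<And>x a b. x \<in> U \<Longrightarrow> a \<in> RN R x \<inter> X \<Longrightarrow> b \<in> RN R x \<inter> X \<Longrightarrow> a = b"
      using cardiff by blast+
    define rep where "rep C = (SOME z. z \<in> C)" for C :: "'a set"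
    have rep: "\<And>y. y \<in> U \<Longrightarrow> rep (RN R y) \<in> RN R y"
      unfolding rep_def by (meson RN_self assms(3) someI)
    define S where "S = X \<union> {rep (RN R y) | y. y \<in> U \<and> RN R y \<inter> X = {}}"
    have SU: "S \<subseteq> U" unfolding S_def using XU rep RN_sub[OF assms(3)] by blast
    have hit: "\<And>y. y \<in> U \<Longrightarrow> RN R y \<inter> S \<noteq> {}"
      unfolding S_def using rep by blast
    have uniq: "\<And>x a b. x \<in> U \<Longrightarrow> a \<in> RN R x \<inter> S \<Longrightarrow> b \<in> RN R x \<inter> S \<Longrightarrow> a = b"
    proof -
      fix x a b assume xU: "x \<in> U" and a: "a \<in> RN R x \<inter> S" and b: "b \<in> RN R x \<inter> S"
      have cl: "\<And>c. c \<in> RN R x \<inter> S \<Longrightarrow> (c \<in> X) \<or> (c = rep (RN R x) \<and> RN R x \<inter> X = {})"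
      proof -
        fix c assume c: "c \<in> RN R x \<inter> S"
        show "(c \<in> X) \<or> (c = rep (RN R x) \<and> RN R x \<inter> X = {})"
        proof (cases "c \<in> X")
          case False
          then obtain y where y: "y \<in> U" "RN R y \<inter> X = {}" "c = rep (RN R y)"
            using c unfolding S_def by blast
          have "c \<in> RN R y" using rep y by simp
          then have "RN R y = RN R c" using RN_eq[OF assms(3)] by metis
          also have "\<dots> = RN R x" using RN_eq[OF assms(3)] c by blast
          finally show ?thesis using y by simp
        qed simp
      qed
      show "a = b" using cl[OF a] cl[OF b] one[OF xU] a b by blast
    qed
    have Ssupp: "S \<in> support_sets U R" using supp SU hit by blast
    have "\<forall>T \<in> support_sets U R. T \<subseteq> S \<longrightarrow> T = S"
    proof (intro ballI impI)
      fix T assume T: "T \<in> support_sets U R" and TS: "T \<subseteq> S"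
      have "S \<subseteq> T"
      proof
        fix z assume z: "z \<in> S"
        then have zU: "z \<in> U" using SU by blast
        obtain t where t: "t \<in> RN R z" "t \<in> T" using T supp zU by blast
        have "t = z" using uniq[OF zU, of t z] t TS z RN_self[OF assms(3) zU] by blast
        then show "z \<in> T" using t by simp
      qed
      then show "T = S" using TS by blast
    qed
    then show "X \<in> indep_sets U R"
      unfolding indep_sets_def using XU Ssupp S_def by blast
  qed
qed

end
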